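(* In the univariate contact-tracing model (described in the context), if $\alpha=\beta>0$, then for every $T\in\mathbb{N}$, every probability distribution $D$ on $\{0,1,2,\dots\}$ and every $p_T\in(0,1]$, every policy is optimal; that is, from any initial frontier, all policies achieve the same expected total benefit.
   Context: Univariate model. Fix $T\in\mathbb{N}$, a probability distribution $D$ on $\{0,1,2,\dots\}$, constants $p_T\in(0,1]$, $\alpha\ge 0$, and a discount parameter $\beta>0$. Every node has a recency $h\in\{0,1,\dots,T\}$. Each node (index case or child of an infected node) of recency $h$ is infected independently with probability $p(h)=p_T e^{-\alpha(T-h)}$. If a node of recency $h$ is infected, then for each $j\in\{0,\dots,h-1\}$ it has $Z_j\sim D$ children of recency $j$, all counts independent across $j$ and across nodes and independent of infection statuses. Contact tracing: at step $t=0$ the frontier is a given finite multiset of index cases with known recencies. At each step $t=0,1,2,\dots$ while the frontier is nonempty, the tracer selects one frontier node and queries it, removing it from the frontier. The query reveals its infection status; if it is infected and has recency $h$, benefit $e^{-\beta(h+t)}$ is collected and its children (with their recencies) are added to the frontier; otherwise benefit $0$ is collected and nothing is added. A policy is a (possibly history-dependent) rule choosing at each step which frontier node to query. A policy is optimal if for every initial frontier it maximizes the expected total collected benefit over all policies. *)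

theory Defs
  imports "HOL-Probability.Probability"
begin

text \<open>Nodes are represented by their recency (a nat).
A frontier is a list of recencies (positions identify nodes). An observation of a query is
None (not infected) or Some zs, where zs ! j = Z_j is the number of children of recency j
(j < h, length zs = h).\<close>

definition inf_prob :: "nat \<Rightarrow> real \<Rightarrow> real \<Rightarrow> nat \<Rightarrow> real" where
  "inf_prob T pT \<alpha> h = pT * exp (- \<alpha> * (real T - real h))"

fun child_counts :: "nat pmf \<Rightarrow> nat \<Rightarrow> nat list pmf" where
  "child_counts D 0 = return_pmf []"
| "child_counts D (Suc h) = bind_pmf (child_counts D h) (\<lambda>xs. map_pmf (\<lambda>z. xs @ [z]) D)"

definition query_outcome :: "nat \<Rightarrow> nat pmf \<Rightarrow> real \<Rightarrow> real \<Rightarrow> nat \<Rightarrow> nat list option pmf" where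
  "query_outcome T D pT \<alpha> h =
     bind_pmf (bernoulli_pmf (inf_prob T pT \<alpha> h))
       (\<lambda>b. if b then map_pmf Some (child_counts D h) else return_pmf None)"

definition children :: "nat list \<Rightarrow> nat list" where
  "children zs = concat (map (\<lambda>j. replicate (zs ! j) j) [0..<length zs])"

definition next_frontier :: "nat list \<Rightarrow> nat \<Rightarrow> nat list option \<Rightarrow> nat list" where
  "next_frontier fr i obs =
     take i fr @ drop (Suc i) fr @ (case obs of None \<Rightarrow> [] | Some zs \<Rightarrow> children zs)"

text \<open>A history step records the frontier at that time, the queried index and the observation.\<close>

type_synonym step = "nat list \<times> nat \<times> nat list option"
type_synonym policy = "step list \<Rightarrow> nat list \<Rightarrow> nat"

definition valid_policy :: "policy \<Rightarrow> bool" where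
  "valid_policy pol \<longleftrightarrow> (\<forall>past fr. fr \<noteq> [] \<longrightarrow> pol past fr < length fr)"

text \<open>Expected benefit collected during the next n steps, given the past (whose length is
the current step t) and the current frontier.\<close>

fun exp_benefit :: "nat \<Rightarrow> nat pmf \<Rightarrow> real \<Rightarrow> real \<Rightarrow> real \<Rightarrow> policy \<Rightarrow> nat \<Rightarrow> step list
                     \<Rightarrow> nat list \<Rightarrow> ennreal" where
  "exp_benefit T D pT \<alpha> \<beta> pol 0 past fr = 0"
| "exp_benefit T D pT \<alpha> \<beta> pol (Suc n) past fr =
     (if fr = [] then 0 else
      (let i = pol past fr; h = fr ! i in
        \<integral>\<^sup>+ obs. ((case obs of None \<Rightarrow> 0
                    | Some _ \<Rightarrow> ennreal (exp (- \<beta> * (real h + real (length past)))))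
                 + exp_benefit T D pT \<alpha> \<beta> pol n (past @ [(fr, i, obs)]) (next_frontier fr i obs))
          \<partial>measure_pmf (query_outcome T D pT \<alpha> h)))"

definition total_benefit :: "nat \<Rightarrow> nat pmf \<Rightarrow> real \<Rightarrow> real \<Rightarrow> real \<Rightarrow> policy \<Rightarrow> nat list \<Rightarrow> ennreal" where
  "total_benefit T D pT \<alpha> \<beta> pol fr = (SUP n. exp_benefit T D pT \<alpha> \<beta> pol n [] fr)"

definition optimal_policy :: "nat \<Rightarrow> nat pmf \<Rightarrow> real \<Rightarrow> real \<Rightarrow> real \<Rightarrow> policy \<Rightarrow> bool" where
  "optimal_policy T D pT \<alpha> \<beta> pol \<longleftrightarrow> valid_policy pol \<and>
     (\<forall>fr. (\<forall>h\<in>set fr. h \<le> T) \<longrightarrow>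
        (\<forall>pol'. valid_policy pol' \<longrightarrow> total_benefit T D pT \<alpha> \<beta> pol' fr \<le> total_benefit T D pT \<alpha> \<beta> pol fr))"

end

theory Submission
  imports Defs
begin

definition chl :: "nat list option \<Rightarrow> nat list" where
  "chl obs = (case obs of None \<Rightarrow> [] | Some zs \<Rightarrow> children zs)"

fun W :: "nat \<Rightarrow> nat pmf \<Rightarrow> real \<Rightarrow> real \<Rightarrow> real \<Rightarrow> nat \<Rightarrow> nat \<Rightarrow> nat list \<Rightarrow> ennreal" where
  "W T D pT \<alpha> \<beta> 0 k fr = 0"
| "W T D pT \<alpha> \<beta> (Suc n) k [] = 0"
| "W T D pT \<alpha> \<beta> (Suc n) k (h # r) = ennreal (pT * exp (- \<beta> * (real T + real k))) +
     (\<integral>\<^sup>+ obs. W T D pT \<alpha> \<beta> n (Suc k) (r @ chl obs) \<partial>measure_pmf (query_outcome T D pT \<alpha> h))"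

lemma swap_int:
  fixes f :: "'a \<Rightarrow> 'b \<Rightarrow> ennreal"
  shows "(\<integral>\<^sup>+ a. \<integral>\<^sup>+ b. f a b \<partial>measure_pmf B \<partial>measure_pmf A) =
         (\<integral>\<^sup>+ b. \<integral>\<^sup>+ a. f a b \<partial>measure_pmf A \<partial>measure_pmf B)"
proof -
  have "(\<integral>\<^sup>+ a. \<integral>\<^sup>+ b. f a b \<partial>measure_pmf B \<partial>measure_pmf A) = (\<integral>\<^sup>+x. f (fst x) (snd x) \<partial>pair_pmf A B)"
    by (simp add: nn_integral_pair_pmf')
  also have "\<dots> = (\<integral>\<^sup>+x. f (snd x) (fst x) \<partial>pair_pmf B A)"
    by (subst pair_commute_pmf) (simp add: case_prod_unfold)
  also have "\<dots> = (\<integral>\<^sup>+ b. \<integral>\<^sup>+ a. f a b \<partial>measure_pmf A \<partial>measure_pmf B)"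
    by (simp add: nn_integral_pair_pmf')
  finally show ?thesis .
qed

lemma W_mset:
  "\<forall>k fr fr'. mset fr = mset fr' \<longrightarrow> W T D pT \<alpha> \<beta> n k fr = W T D pT \<alpha> \<beta> n k fr'"
proof (induction n rule: less_induct)
  case (less n)
  show ?case
  proof (intro allI impI)
    fix k fr fr' assume eq: "mset fr = mset (fr' :: nat list)"
    show "W T D pT \<alpha> \<beta> n k fr = W T D pT \<alpha> \<beta> n k fr'"
    proof (cases n)
      case 0 then show ?thesis by simp
    next
      case (Suc m)
      show ?thesis
      proof (cases fr)
        case Nil then show ?thesis using eq by simp
      next
        case (Cons a r)
        then obtain b r' where fr': "fr' = b # r'" using eq by (cases fr') auto
        show ?thesis
        proof (cases "a = b")
          case True
          then have "mset r = mset r'" using eq Cons fr' by simp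
          then have "\<And>obs. W T D pT \<alpha> \<beta> m (Suc k) (r @ chl obs) = W T D pT \<alpha> \<beta> m (Suc k) (r' @ chl obs)"
            using less[of m] Suc by simp
          then show ?thesis using Cons fr' Suc True by simp
        next
          case False
          have "set (a # r) = set (b # r')" using eq Cons fr' mset_eq_setD by blast
          then have bin: "b \<in> set r" using False by auto
          define s where "s = remove1 b r"
          have ms: "mset r = mset (b # s)" using bin unfolding s_def by simp
          have ms': "mset r' = mset (a # s)"
          proof -
            have "add_mset a (mset r) = add_mset b (mset r')" using eq Cons fr' by simp
            then show ?thesis using ms by (simp add: add_mset_commute)
          qed
          define C where "C = (\<lambda>k. ennreal (pT * exp (- \<beta> * (real T + real k))))"
          define F where "F = (\<lambda>oa ob. W T D pT \<alpha> \<beta> (m - 1) (Suc (Suc k)) (s @ chl oa @ chl ob))"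
          define QA where "QA = measure_pmf (query_outcome T D pT \<alpha> a)"
          define QB where "QB = measure_pmf (query_outcome T D pT \<alpha> b)"
          have key: "\<And>x y r0. mset r0 = mset (y # s) \<Longrightarrow>
             W T D pT \<alpha> \<beta> n k (x # r0) = C k + C (Suc k) * of_bool (m > 0) +
               (\<integral>\<^sup>+ ox. \<integral>\<^sup>+ oy. F ox oy \<partial>measure_pmf (query_outcome T D pT \<alpha> y)
                  \<partial>measure_pmf (query_outcome T D pT \<alpha> x))"
          proof -
            fix x y r0 assume mr: "mset r0 = mset (y # s)"
            have "\<And>ox. W T D pT \<alpha> \<beta> m (Suc k) (r0 @ chl ox) = W T D pT \<alpha> \<beta> m (Suc k) (y # s @ chl ox)"
              using less[of m] Suc mr by simp
            then have "W T D pT \<alpha> \<beta> n k (x # r0) = C k +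
               (\<integral>\<^sup>+ ox. W T D pT \<alpha> \<beta> m (Suc k) (y # s @ chl ox) \<partial>measure_pmf (query_outcome T D pT \<alpha> x))"
              using Suc by (simp add: C_def)
            also have "\<dots> = C k + C (Suc k) * of_bool (m > 0) +
               (\<integral>\<^sup>+ ox. \<integral>\<^sup>+ oy. F ox oy \<partial>measure_pmf (query_outcome T D pT \<alpha> y)
                  \<partial>measure_pmf (query_outcome T D pT \<alpha> x))"
            proof (cases m)
              case 0 then show ?thesis by (simp add: F_def)
            next
              case (Suc m')
              then show ?thesis
                by (simp add: F_def C_def nn_integral_add measure_pmf.emeasure_space_1 add.assoc)
            qed
            finally show "W T D pT \<alpha> \<beta> n k (x # r0) = C k + C (Suc k) * of_bool (m > 0) +
               (\<integral>\<^sup>+ ox. \<integral>\<^sup>+ oy. F ox oy \<partial>measure_pmf (query_outcome T D pT \<alpha> y)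
                  \<partial>measure_pmf (query_outcome T D pT \<alpha> x))" .
          qed
          have Fsym: "\<And>oa ob. F oa ob = F ob oa"
          proof -
            fix oa ob
            show "F oa ob = F ob oa" unfolding F_def
              using less[of "m - 1"] Suc by (simp add: add_ac)
          qed
          have sw: "(\<integral>\<^sup>+ oa. \<integral>\<^sup>+ ob. F oa ob \<partial>measure_pmf (query_outcome T D pT \<alpha> b) \<partial>measure_pmf (query_outcome T D pT \<alpha> a))
              = (\<integral>\<^sup>+ ob. \<integral>\<^sup>+ oa. F ob oa \<partial>measure_pmf (query_outcome T D pT \<alpha> a) \<partial>measure_pmf (query_outcome T D pT \<alpha> b))"
            by (subst swap_int) (simp add: Fsym)
          show ?thesis
            unfolding Cons fr' key[OF ms, of a] key[OF ms', of b] sw ..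

        qed
      qed
    qed
  qed
qed

lemma child_counts_len: "zs \<in> set_pmf (child_counts D h) \<Longrightarrow> length zs = h"
  by (induction h arbitrary: zs) auto

lemma children_lt: "x \<in> set (children zs) \<Longrightarrow> x < length zs"
  unfolding children_def by (auto split: if_splits)

lemma chl_lt: "obs \<in> set_pmf (query_outcome T D pT \<alpha> h) \<Longrightarrow> x \<in> set (chl obs) \<Longrightarrow> x < h"
  unfolding query_outcome_def chl_def
  by (auto split: if_splits option.splits dest: child_counts_len children_lt)

lemma reward_int:
  assumes "\<alpha> = \<beta>" "0 < pT" "pT \<le> 1" "\<beta> > 0" "h \<le> T"
  shows "(\<integral>\<^sup>+ obs. (case obs of None \<Rightarrow> 0
                    | Some _ \<Rightarrow> ennreal (exp (- \<beta> * (real h + real k)))) \<partial>measure_pmf (query_outcome T D pT \<alpha> h))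
     = ennreal (pT * exp (- \<beta> * (real T + real k)))"
proof -
  have p0: "0 \<le> inf_prob T pT \<alpha> h" using assms unfolding inf_prob_def by simp
  have "exp (- \<alpha> * (real T - real h)) \<le> 1" using assms by simp
  then have p1: "inf_prob T pT \<alpha> h \<le> 1" using assms unfolding inf_prob_def
    by (simp add: mult_le_one)
  have "(\<integral>\<^sup>+ obs. (case obs of None \<Rightarrow> 0
                    | Some _ \<Rightarrow> ennreal (exp (- \<beta> * (real h + real k)))) \<partial>measure_pmf (query_outcome T D pT \<alpha> h))
     = ennreal (exp (- \<beta> * (real h + real k))) * ennreal (inf_prob T pT \<alpha> h)"
    unfolding query_outcome_def using p0 p1
    by (simp add: measure_pmf.emeasure_space_1)
  also have "\<dots> = ennreal (exp (- \<beta> * (real h + real k)) * inf_prob T pT \<alpha> h)"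
    using p0 by (simp add: ennreal_mult)
  also have "exp (- \<beta> * (real h + real k)) * inf_prob T pT \<alpha> h = pT * exp (- \<beta> * (real T + real k))"
    unfolding inf_prob_def using assms(1)
    by (simp add: mult_exp_exp algebra_simps)
  finally show ?thesis .
qed

lemma eb_W:
  assumes "\<alpha> = \<beta>" "0 < pT" "pT \<le> 1" "\<beta> > 0" "valid_policy pol"
  shows "\<forall>past fr. (\<forall>h\<in>set fr. h \<le> T) \<longrightarrow>
     exp_benefit T D pT \<alpha> \<beta> pol n past fr = W T D pT \<alpha> \<beta> n (length past) fr"
proof (induction n)
  case 0 then show ?case by simp
next
  case (Suc n)
  show ?case
  proof (intro allI impI)
    fix past fr assume bd: "\<forall>h\<in>set fr. h \<le> T"
    show "exp_benefit T D pT \<alpha> \<beta> pol (Suc n) past fr = W T D pT \<alpha> \<beta> (Suc n) (length past) fr"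
    proof (cases "fr = []")
      case True then show ?thesis by simp
    next
      case False
      define i where "i = pol past fr"
      define h where "h = fr ! i"
      define rest where "rest = take i fr @ drop (Suc i) fr"
      have il: "i < length fr" using assms(5) False unfolding i_def valid_policy_def by blast
      have hT: "h \<le> T" using bd il unfolding h_def by simp
      have e: "take i fr @ h # drop (Suc i) fr = fr"
        unfolding h_def by (rule id_take_nth_drop[OF il, symmetric])
      have ms: "mset fr = mset (h # rest)"
        using arg_cong[OF e, of mset] by (simp add: rest_def)
      have restb: "\<forall>x\<in>set rest. x \<le> T" using bd unfolding rest_def
        by (auto dest: in_set_takeD in_set_dropD)
      have nf: "\<And>obs. next_frontier fr i obs = rest @ chl obs"
        unfolding next_frontier_def rest_def chl_def by simp
      have IH: "\<And>obs. obs \<in> set_pmf (query_outcome T D pT \<alpha> h) \<Longrightarrow>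
          exp_benefit T D pT \<alpha> \<beta> pol n (past @ [(fr, i, obs)]) (next_frontier fr i obs)
          = W T D pT \<alpha> \<beta> n (Suc (length past)) (rest @ chl obs)"
      proof -
        fix obs assume o: "obs \<in> set_pmf (query_outcome T D pT \<alpha> h)"
        have "\<forall>x\<in>set (rest @ chl obs). x \<le> T"
          using restb chl_lt[OF o] hT by fastforce
        then show "exp_benefit T D pT \<alpha> \<beta> pol n (past @ [(fr, i, obs)]) (next_frontier fr i obs)
          = W T D pT \<alpha> \<beta> n (Suc (length past)) (rest @ chl obs)"
          using Suc.IH[rule_format, of "rest @ chl obs" "past @ [(fr, i, obs)]"] nf by simp
      qed
      have "exp_benefit T D pT \<alpha> \<beta> pol (Suc n) past fr =
         (\<integral>\<^sup>+ obs. ((case obs of None \<Rightarrow> 0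
                    | Some _ \<Rightarrow> ennreal (exp (- \<beta> * (real h + real (length past)))))
                 + exp_benefit T D pT \<alpha> \<beta> pol n (past @ [(fr, i, obs)]) (next_frontier fr i obs))
          \<partial>measure_pmf (query_outcome T D pT \<alpha> h))"
        using False unfolding i_def h_def by (simp add: Let_def)
      also have "\<dots> = (\<integral>\<^sup>+ obs. ((case obs of None \<Rightarrow> 0
                    | Some _ \<Rightarrow> ennreal (exp (- \<beta> * (real h + real (length past)))))
                 + W T D pT \<alpha> \<beta> n (Suc (length past)) (rest @ chl obs))
          \<partial>measure_pmf (query_outcome T D pT \<alpha> h))"
        by (intro nn_integral_cong_AE) (simp add: AE_measure_pmf_iff IH)
      also have "\<dots> = (\<integral>\<^sup>+ obs. (case obs of None \<Rightarrow> 0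
                    | Some _ \<Rightarrow> ennreal (exp (- \<beta> * (real h + real (length past)))))
          \<partial>measure_pmf (query_outcome T D pT \<alpha> h)) +
          (\<integral>\<^sup>+ obs. W T D pT \<alpha> \<beta> n (Suc (length past)) (rest @ chl obs)
          \<partial>measure_pmf (query_outcome T D pT \<alpha> h))"
        by (rule nn_integral_add) auto
      also have "\<dots> = W T D pT \<alpha> \<beta> (Suc n) (length past) (h # rest)"
        using reward_int[OF assms(1-4) hT] by simp
      also have "\<dots> = W T D pT \<alpha> \<beta> (Suc n) (length past) fr"
        by (rule W_mset[rule_format, OF ms[symmetric]])
      finally show ?thesis .
    qed
  qed
qed

theorem theorem6p4:
  fixes T :: nat and D :: "nat pmf" and pT \<alpha> \<beta> :: real and pol :: policy
  assumes "\<alpha> = \<beta>" and "\<beta> > 0" and "0 < pT" and "pT \<le> 1"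
    and "valid_policy pol"
  shows "optimal_policy T D pT \<alpha> \<beta> pol"
proof -
  have tb: "\<And>p fr. valid_policy p \<Longrightarrow> (\<forall>h\<in>set fr. h \<le> T) \<Longrightarrow>
     total_benefit T D pT \<alpha> \<beta> p fr = (SUP n. W T D pT \<alpha> \<beta> n 0 fr)"
  proof -
    fix p fr assume vp: "valid_policy p" and bd: "\<forall>h\<in>set fr. h \<le> T"
    have "\<And>n. exp_benefit T D pT \<alpha> \<beta> p n [] fr = W T D pT \<alpha> \<beta> n 0 fr"
      using eb_W[OF assms(1,3,4,2) vp] bd by (metis list.size(3))
    then show "total_benefit T D pT \<alpha> \<beta> p fr = (SUP n. W T D pT \<alpha> \<beta> n 0 fr)"
      unfolding total_benefit_def by simp
  qed
  show ?thesis unfolding optimal_policy_def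
  proof (intro conjI allI impI)
    fix fr pol' assume bd: "\<forall>h\<in>set fr. h \<le> T" and vp: "valid_policy pol'"
    show "total_benefit T D pT \<alpha> \<beta> pol' fr \<le> total_benefit T D pT \<alpha> \<beta> pol fr"
      using tb[OF vp bd] tb[OF assms(5) bd] by (rule ord_eq_le_trans[OF _ eq_refl[OF sym]])
  qed (rule assms(5))
qed

end
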